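(* Let $\mathcal{F}$ be a finite family of convex bodies in $\mathbb{R}^d$, let $p\in\mathbb{R}^d$ and let $k$ be a natural number with $k\le d+1$ and $k\le|\mathcal{F}|$. Assume that every point of $\mathbb{R}^d$ is at positive distance from at least one element of $\mathcal{F}$. Let $\mathcal{F}^*\subseteq\mathcal{F}$ be a subfamily of size $k$ such that the distance from $p$ to $\bigcap_{K\in\mathcal{F}^*}K$ is maximal among all subfamilies of $\mathcal{F}$ of size $k$. If $\bigcap_{K\in\mathcal{F}^*}K\neq\emptyset$, then the point $q$ of $\bigcap_{K\in\mathcal{F}^*}K$ closest to $p$ lies in $\bigcap_{K\in\mathcal{F}^*}\partial K$.
   Context: A convex body is a compact convex set with nonempty interior; $\partial K$ denotes the boundary of $K$; distances are Euclidean, with the distance to the empty set taken to be $\infty$. *)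

theory Defs
  imports "HOL-Analysis.Analysis" "HOL-Library.Extended_Real"
begin

definition convex_body :: "'a::euclidean_space set \<Rightarrow> bool" where
  "convex_body K \<longleftrightarrow> compact K \<and> convex K \<and> interior K \<noteq> {}"

definition setdist_pt :: "'a::euclidean_space \<Rightarrow> 'a set \<Rightarrow> ereal" where
  "setdist_pt p S = (if S = {} then \<infinity> else ereal (infdist p S))"

end

theory Submission
  imports Defs
begin

lemma local_global_closest:
  fixes p q :: "'a::euclidean_space"
  assumes cv: "convex C" and q: "q \<in> C" and qi: "q \<in> interior K0"
    and mn: "\<forall>z\<in>C \<inter> K0. dist p q \<le> dist p z"
  shows "\<forall>y\<in>C. dist p q \<le> dist p y"
proof
  fix y assume y: "y \<in> C"
  obtain e where e: "e > 0" "ball q e \<subseteq> K0" using qi mem_interior by blast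
  define t where "t = min 1 (e / (2 * (norm (y - q) + 1)))"
  have t0: "0 < t" "t \<le> 1" proof -
    have "0 < 2 * (norm (y - q) + 1)" by (simp add: add_nonneg_pos)
    then show "0 < t" "t \<le> 1" using e unfolding t_def by auto
  qed
  define z where "z = (1 - t) *\<^sub>R q + t *\<^sub>R y"
  have "z \<in> C" using convexD_alt[OF cv q y, of t] t0 z_def by auto
  have "dist q z = t * norm (y - q)"
  proof -
    have "q - z = t *\<^sub>R (q - y)" by (simp add: z_def algebra_simps)
    then show ?thesis using t0 by (simp add: dist_norm norm_minus_commute)
  qed
  also have "\<dots> \<le> (e / (2 * (norm (y - q) + 1))) * norm (y - q)"
    by (rule mult_right_mono) (auto simp: t_def)
  also have "\<dots> < e"
  proof -
    have "norm (y - q) / (2 * (norm (y - q) + 1)) < 1"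
      by (simp add: divide_less_eq add_nonneg_pos)
    then have "e * (norm (y - q) / (2 * (norm (y - q) + 1))) < e * 1"
      using e by (intro mult_strict_left_mono) auto
    then show ?thesis by simp
  qed
  finally have "z \<in> K0" using e by auto
  with \<open>z \<in> C\<close> have "dist p q \<le> dist p z" using mn by auto
  also have "dist p z \<le> (1 - t) * dist p q + t * dist p y"
    using convex_on_dist[of UNIV p] t0 unfolding convex_on_def z_def by auto
  finally have "t * dist p q \<le> t * dist p y" by (simp add: algebra_simps)
  then show "dist p q \<le> dist p y" using t0 by simp
qed

theorem proposition13p1:
  fixes \<F> :: "'a::euclidean_space set set" and p :: 'a and k :: nat and \<F>s :: "'a set set"
  assumes "finite \<F>"
    and "\<forall>K\<in>\<F>. convex_body K"
    and "k \<le> DIM('a) + 1" and "k \<le> card \<F>"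
    and "\<forall>x::'a. \<exists>K\<in>\<F>. setdist_pt x K > 0"
    and "\<F>s \<subseteq> \<F>" and "card \<F>s = k"
    and "\<forall>\<G>. \<G> \<subseteq> \<F> \<and> card \<G> = k \<longrightarrow> setdist_pt p (\<Inter>\<G>) \<le> setdist_pt p (\<Inter>\<F>s)"
    and "\<Inter>\<F>s \<noteq> {}"
  shows "closest_point (\<Inter>\<F>s) p \<in> (\<Inter>K\<in>\<F>s. frontier K)"
proof (rule ccontr)
  assume nf: "\<not> ?thesis"
  define C where "C = \<Inter>\<F>s"
  define q where "q = closest_point C p"
  have clF: "\<And>K. K \<in> \<F> \<Longrightarrow> closed K \<and> convex K \<and> K \<noteq> {}"
    using assms(2) unfolding convex_body_def by (auto simp: compact_imp_closed)
  have fin: "finite \<F>s" using assms(1,6) finite_subset by blast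
  have Ccl: "closed C" "convex C" using clF assms(6) unfolding C_def
    by (auto intro!: closed_Inter convex_Inter)
  have qC: "q \<in> C" unfolding q_def using Ccl assms(9) C_def closest_point_in_set by blast
  have qmin: "\<forall>y\<in>C. dist p q \<le> dist p y" unfolding q_def
    using closest_point_exists(2)[OF Ccl(1)] assms(9) C_def by blast
  obtain K0 where K0: "K0 \<in> \<F>s" "q \<notin> frontier K0" using nf q_def C_def by blast
  have "q \<in> K0" using qC K0 C_def by auto
  then have qint: "q \<in> interior K0"
    using K0 clF assms(6) unfolding frontier_def by (auto simp: closure_closed)
  define C' where "C' = \<Inter>(\<F>s - {K0})"
  have C'cl: "closed C'" "convex C'" using clF assms(6) unfolding C'_def
    by (auto intro!: closed_Inter convex_Inter)
  have CC': "C = C' \<inter> K0" using K0 unfolding C_def C'_def by auto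
  have qC': "q \<in> C'" using qC CC' by auto
  have qmin': "\<forall>y\<in>C'. dist p q \<le> dist p y"
    by (rule local_global_closest[OF C'cl(2) qC' qint]) (use qmin CC' in auto)
  have sd: "setdist_pt p C = ereal (dist p q)"
  proof -
    obtain x where x: "x \<in> C" "infdist p C = dist p x"
      using infdist_attains_inf[OF Ccl(1)] assms(9) C_def by metis
    have "infdist p C = dist p q"
      using x qmin infdist_le[OF qC, of p] by (metis order_antisym)
    then show ?thesis unfolding setdist_pt_def using assms(9) C_def by simp
  qed
  have qK: "q \<in> K" if K: "K \<in> \<F>" for K
  proof (cases "K \<in> \<F>s - {K0}")
    case True then show ?thesis using qC' C'_def by auto
  next
    case False
    define G where "G = insert K (\<F>s - {K0})"
    have "card G = k"
      using False fin K0(1) assms(7) unfolding G_def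
      by (simp add: card_insert_if) (metis One_nat_def Suc_pred card_gt_0_iff empty_iff)
    moreover have "G \<subseteq> \<F>" using K assms(6) G_def by auto
    ultimately have le: "setdist_pt p (\<Inter>G) \<le> ereal (dist p q)"
      using assms(8) sd C_def by metis
    have IG: "\<Inter>G = C' \<inter> K" unfolding G_def C'_def by auto
    have ne: "C' \<inter> K \<noteq> {}" using le IG unfolding setdist_pt_def by auto
    obtain z where z: "z \<in> C' \<inter> K" "infdist p (C' \<inter> K) = dist p z"
      using infdist_attains_inf[of "C' \<inter> K" p] ne C'cl clF[OF K] by blast
    have "dist p z \<le> dist p q" using le IG ne z unfolding setdist_pt_def by auto
    then have "\<forall>y\<in>C'. dist p z \<le> dist p y" using qmin' by force
    then have "z = q"
      using closest_point_unique[OF C'cl(2,1) z(1)[THEN IntD1]]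
        closest_point_unique[OF C'cl(2,1) qC' qmin'] by simp
    then show ?thesis using z by auto
  qed
  obtain K where K: "K \<in> \<F>" "setdist_pt q K > 0" using assms(5) by blast
  then show False using qK[OF K(1)] clF[OF K(1)] unfolding setdist_pt_def by auto
qed

end
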